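(* Let $\mathcal{R}\subseteq\mathbb{R}^{\mathcal{S}\times\mathcal{A}}$ be a nonempty compact convex set. Then there exists a stationary policy $\pi\in\Pi$ that achieves the maximal robust return over all (history-dependent, randomized) policies, i.e. $$\min_{R\in\mathcal{R}}\mathbb{E}\Big[\sum_{t=0}^\infty\gamma^tR(s_t,a_t)\,\Big|\,s_0\sim\mu,\ a_t\sim\pi(\cdot|s_t),\ s_{t+1}\sim P(\cdot|s_t,a_t)\Big]=\sup_{\pi'}\min_{R\in\mathcal{R}}\mathbb{E}\Big[\sum_{t=0}^\infty\gamma^tR(s_t,a_t)\,\Big|\,s_0\sim\mu,\ a_t\sim\pi'_t(\cdot|h_t),\ s_{t+1}\sim P(\cdot|s_t,a_t)\Big],$$ where the supremum ranges over all history-dependent randomized policies $\pi'=(\pi'_t)_{t\ge0}$.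
   Context: Finite MDP with finite state space $\mathcal{S}$, finite action space $\mathcal{A}$, transition kernel $P$, discount factor $\gamma\in[0,1)$ and initial distribution $\mu\in\Delta_{\mathcal{S}}$ with $\mu(s)>0$ for all $s$. The reward $R$ is unknown but lies in the uncertainty set $\mathcal{R}$. A history-dependent randomized policy is a sequence of decision rules $\pi'_t$ mapping the history $h_t=(s_0,a_0,\dots,s_t)$ to a distribution over $\mathcal{A}$; $\Pi$ denotes the set of stationary randomized policies $\pi:\mathcal{S}\to\Delta_{\mathcal{A}}$. *)

theory Defs
  imports "HOL-Analysis.Analysis" "HOL-Probability.Probability_Mass_Function"
begin

text \<open>A history-dependent randomized policy is a function
  pi t h s :: 'a pmf, where h = [(s_0,a_0),...,(s_{t-1},a_{t-1})] and s = s_t,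
  i.e. the history h_t = (s_0,a_0,...,s_t).\<close>

type_synonym ('s,'a) hpolicy = "nat \<Rightarrow> ('s \<times> 'a) list \<Rightarrow> 's \<Rightarrow> 'a pmf"

fun hist_dist :: "('s \<Rightarrow> 'a \<Rightarrow> 's pmf) \<Rightarrow> 's pmf \<Rightarrow> ('s,'a) hpolicy \<Rightarrow> nat
    \<Rightarrow> (('s \<times> 'a) list \<times> 's) pmf" where
  "hist_dist P mu pol 0 = map_pmf (\<lambda>s. ([], s)) mu"
| "hist_dist P mu pol (Suc t) =
     bind_pmf (hist_dist P mu pol t) (\<lambda>(h, s).
       bind_pmf (pol t h s) (\<lambda>a.
         map_pmf (\<lambda>s'. (h @ [(s, a)], s')) (P s a)))"

definition sa_dist :: "('s \<Rightarrow> 'a \<Rightarrow> 's pmf) \<Rightarrow> 's pmf \<Rightarrow> ('s,'a) hpolicy \<Rightarrow> nat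
    \<Rightarrow> ('s \<times> 'a) pmf" where
  "sa_dist P mu pol t =
     bind_pmf (hist_dist P mu pol t) (\<lambda>(h, s). map_pmf (\<lambda>a. (s, a)) (pol t h s))"

definition disc_return :: "('s::finite \<Rightarrow> 'a::finite \<Rightarrow> 's pmf) \<Rightarrow> 's pmf \<Rightarrow> real \<Rightarrow> ('s,'a) hpolicy
    \<Rightarrow> real ^ ('s \<times> 'a) \<Rightarrow> real" where
  "disc_return P mu \<gamma> pol R =
     (\<Sum>t. \<gamma> ^ t * measure_pmf.expectation (sa_dist P mu pol t) (\<lambda>sa. R $ sa))"

definition stationary :: "('s \<Rightarrow> 'a pmf) \<Rightarrow> ('s,'a) hpolicy" where
  "stationary \<pi> = (\<lambda>t h s. \<pi> s)"

end

theory Submission imports Defs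
begin

definition stq :: "('s \<Rightarrow> 'a \<Rightarrow> 's pmf) \<Rightarrow> 's pmf \<Rightarrow> ('s,'a) hpolicy \<Rightarrow> nat \<Rightarrow> 's pmf" where
  "stq P mu pol t = map_pmf snd (hist_dist P mu pol t)"

lemma pmf_map_fst_sum:
  fixes X :: "('s \<times> 'a::finite) pmf"
  shows "pmf (map_pmf fst X) s = (\<Sum>a\<in>UNIV. pmf X (s,a))"
proof -
  have e: "fst -` {s} = Pair s ` (UNIV::'a set)" by auto
  have "pmf (map_pmf fst X) s = measure X (Pair s ` UNIV)" by (simp add: pmf_map e)
  also have "\<dots> = sum (pmf X) (Pair s ` UNIV)"
    by (rule measure_measure_pmf_finite) simp
  also have "\<dots> = (\<Sum>a\<in>UNIV. pmf X (s,a))"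
    by (subst sum.reindex) (auto simp: inj_on_def)
  finally show ?thesis .
qed

lemma pmf_bind_finite:
  fixes X :: "'b::finite pmf"
  shows "pmf (bind_pmf X f) y = (\<Sum>x\<in>UNIV. pmf X x * pmf (f x) y)"
  by (simp add: pmf_bind integral_measure_pmf_real[where A=UNIV] mult.commute)

lemma map_fst_sa_dist: "map_pmf fst (sa_dist P mu pol t) = stq P mu pol t"
  unfolding sa_dist_def stq_def map_bind_pmf
  by (simp add: map_pmf_comp split_beta map_pmf_def[symmetric] map_pmf_const)

lemma stq_0: "stq P mu pol 0 = mu"
  by (simp add: stq_def map_pmf_comp)

lemma stq_Suc: "stq P mu pol (Suc t) = bind_pmf (sa_dist P mu pol t) (\<lambda>sa. P (fst sa) (snd sa))"
  unfolding sa_dist_def stq_def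
  by (simp add: map_bind_pmf bind_assoc_pmf bind_map_pmf map_pmf_comp split_beta map_pmf_def[symmetric])

lemma sa_dist_stationary:
  fixes \<pi> :: "'s::finite \<Rightarrow> 'a pmf"
  shows "pmf (sa_dist P mu (stationary \<pi>) t) (s,a) = pmf (stq P mu (stationary \<pi>) t) s * pmf (\<pi> s) a"
proof -
  have "sa_dist P mu (stationary \<pi>) t = bind_pmf (stq P mu (stationary \<pi>) t) (\<lambda>s. map_pmf (Pair s) (\<pi> s))"
    unfolding sa_dist_def stq_def stationary_def bind_map_pmf by (intro bind_pmf_cong) auto
  hence "pmf (sa_dist P mu (stationary \<pi>) t) (s,a) = 
     (\<Sum>x\<in>UNIV. pmf (stq P mu (stationary \<pi>) t) x * pmf (map_pmf (Pair x) (\<pi> x)) (s,a))"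
    by (simp add: pmf_bind_finite)
  also have "\<dots> = (\<Sum>x\<in>UNIV. if x = s then pmf (stq P mu (stationary \<pi>) t) s * pmf (\<pi> s) a else 0)"
  proof (rule sum.cong)
    fix x assume "x \<in> (UNIV::'s set)"
    show "pmf (stq P mu (stationary \<pi>) t) x * pmf (map_pmf (Pair x) (\<pi> x)) (s,a)
       = (if x = s then pmf (stq P mu (stationary \<pi>) t) s * pmf (\<pi> s) a else 0)"
    proof (cases "x = s")
      case True thus ?thesis by (simp add: pmf_map_inj' inj_on_def)
    next
      case False thus ?thesis by (subst pmf_map_outside) auto
    qed
  qed simp
  finally show ?thesis by simp
qed


definition occ :: "('s::finite \<Rightarrow> 'a::finite \<Rightarrow> 's pmf) \<Rightarrow> 's pmf \<Rightarrow> real \<Rightarrow> ('s,'a) hpolicy \<Rightarrow> real ^ ('s \<times> 'a)" where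
  "occ P mu \<gamma> pol = (\<chi> sa. \<Sum>t. \<gamma> ^ t * pmf (sa_dist P mu pol t) sa)"

lemma summable_geo_bounded:
  fixes \<gamma> :: real
  assumes "0 \<le> \<gamma>" "\<gamma> < 1" "\<And>t. 0 \<le> f t" "\<And>t. f t \<le> 1"
  shows "summable (\<lambda>t. \<gamma> ^ t * f t)"
proof (rule summable_comparison_test'[OF summable_geometric[of \<gamma>]])
  fix n show "norm (\<gamma> ^ n * f n) \<le> \<gamma> ^ n"
    using assms by (simp add: abs_mult mult_left_le)
qed (use assms in auto)

lemma summable_sa:
  fixes \<gamma> :: real
  assumes "0 \<le> \<gamma>" "\<gamma> < 1"
  shows "summable (\<lambda>t. \<gamma> ^ t * pmf (X t) x)"
  by (rule summable_geo_bounded) (use assms pmf_le_1 in auto)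

lemma disc_return_occ:
  assumes "0 \<le> \<gamma>" "\<gamma> < 1"
  shows "disc_return P mu \<gamma> pol R = R \<bullet> occ P mu \<gamma> pol"
proof -
  have "disc_return P mu \<gamma> pol R = (\<Sum>t. \<Sum>sa\<in>UNIV. R $ sa * (\<gamma> ^ t * pmf (sa_dist P mu pol t) sa))"
    unfolding disc_return_def
    by (simp add: integral_measure_pmf_real[where A=UNIV] sum_distrib_left mult_ac)
  also have "\<dots> = (\<Sum>sa\<in>UNIV. \<Sum>t. R $ sa * (\<gamma> ^ t * pmf (sa_dist P mu pol t) sa))"
    by (rule suminf_sum) (intro summable_mult summable_sa assms)
  also have "\<dots> = (\<Sum>sa\<in>UNIV. R $ sa * occ P mu \<gamma> pol $ sa)"
    unfolding occ_def
    by (intro sum.cong refl) (simp add: suminf_mult summable_sa assms)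
  finally show ?thesis by (simp add: inner_vec_def)
qed

lemma occ_nonneg: "0 \<le> \<gamma> \<Longrightarrow> \<gamma> < 1 \<Longrightarrow> 0 \<le> occ P mu \<gamma> pol $ i"
  unfolding occ_def by (simp add: suminf_nonneg summable_sa)

lemma occ_state:
  assumes "0 \<le> \<gamma>" "\<gamma> < 1"
  shows "(\<Sum>a\<in>UNIV. occ P mu \<gamma> pol $ (s,a)) = (\<Sum>t. \<gamma> ^ t * pmf (stq P mu pol t) s)"
proof -
  have "(\<Sum>a\<in>UNIV. occ P mu \<gamma> pol $ (s,a)) = (\<Sum>t. \<Sum>a\<in>UNIV. \<gamma> ^ t * pmf (sa_dist P mu pol t) (s,a))"
    unfolding occ_def by (simp add: suminf_sum summable_sa assms)
  also have "\<dots> = (\<Sum>t. \<gamma> ^ t * pmf (stq P mu pol t) s)"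
    by (simp add: sum_distrib_left[symmetric] pmf_map_fst_sum[symmetric] map_fst_sa_dist)
  finally show ?thesis .
qed

lemma occ_flow:
  fixes P :: "'s::finite \<Rightarrow> 'a::finite \<Rightarrow> 's pmf"
  assumes "0 \<le> \<gamma>" "\<gamma> < 1"
  shows "(\<Sum>a\<in>UNIV. occ P mu \<gamma> pol $ (s',a)) = pmf mu s' +
     \<gamma> * (\<Sum>sa\<in>UNIV. pmf (P (fst sa) (snd sa)) s' * occ P mu \<gamma> pol $ sa)"
proof -
  let ?q = "\<lambda>t. \<gamma> ^ t * pmf (stq P mu pol t) s'"
  have sq: "summable ?q" by (rule summable_sa) (use assms in auto)
  have "(\<Sum>a\<in>UNIV. occ P mu \<gamma> pol $ (s',a)) = suminf ?q" by (rule occ_state[OF assms])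
  also have "\<dots> = (\<Sum>t. ?q (Suc t)) + ?q 0" using suminf_split_head[OF sq] by simp
  also have "(\<Sum>t. ?q (Suc t)) = (\<Sum>t. \<gamma> * (\<Sum>sa\<in>UNIV. pmf (P (fst sa) (snd sa)) s' * (\<gamma> ^ t * pmf (sa_dist P mu pol t) sa)))"
    by (simp add: stq_Suc pmf_bind_finite sum_distrib_left mult_ac)
  also have "\<dots> = \<gamma> * (\<Sum>t. (\<Sum>sa\<in>UNIV. pmf (P (fst sa) (snd sa)) s' * (\<gamma> ^ t * pmf (sa_dist P mu pol t) sa)))"
    by (rule suminf_mult) (intro summable_sum summable_mult summable_sa assms)
  also have "(\<Sum>t. (\<Sum>sa\<in>UNIV. pmf (P (fst sa) (snd sa)) s' * (\<gamma> ^ t * pmf (sa_dist P mu pol t) sa)))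
      = (\<Sum>sa\<in>UNIV. \<Sum>t. pmf (P (fst sa) (snd sa)) s' * (\<gamma> ^ t * pmf (sa_dist P mu pol t) sa))"
    by (rule suminf_sum) (intro summable_mult summable_sa assms)
  also have "\<dots> = (\<Sum>sa\<in>UNIV. pmf (P (fst sa) (snd sa)) s' * occ P mu \<gamma> pol $ sa)"
    unfolding occ_def by (intro sum.cong refl) (simp add: suminf_mult summable_sa assms)
  finally show ?thesis by (simp add: stq_0)
qed


lemma contraction_zero:
  fixes z :: "'s::finite \<Rightarrow> real" and K :: "'s \<times> 'a::finite \<Rightarrow> 's \<Rightarrow> real"
    and w :: "'s \<times> 'a \<Rightarrow> real" and \<gamma> :: real
  assumes g: "0 \<le> \<gamma>" "\<gamma> < 1"
    and K0: "\<And>sa s'. 0 \<le> K sa s'"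
    and Kw: "\<And>sa. (\<Sum>s'\<in>UNIV. K sa s') = w sa"
    and w1: "\<And>s. (\<Sum>a\<in>UNIV. w (s,a)) = 1"
    and fx: "\<And>s'. z s' = \<gamma> * (\<Sum>sa\<in>UNIV. K sa s' * z (fst sa))"
  shows "z s = 0"
proof -
  let ?S = "\<Sum>s\<in>UNIV. \<bar>z s\<bar>"
  have "?S \<le> (\<Sum>s'\<in>UNIV. \<gamma> * (\<Sum>sa\<in>UNIV. K sa s' * \<bar>z (fst sa)\<bar>))"
  proof (rule sum_mono)
    fix s' :: 's
    have "\<bar>z s'\<bar> = \<gamma> * \<bar>\<Sum>sa\<in>UNIV. K sa s' * z (fst sa)\<bar>"
      by (subst fx) (simp add: abs_mult g)
    also have "\<dots> \<le> \<gamma> * (\<Sum>sa\<in>UNIV. \<bar>K sa s' * z (fst sa)\<bar>)"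
      by (intro mult_left_mono sum_abs g)
    also have "\<dots> = \<gamma> * (\<Sum>sa\<in>UNIV. K sa s' * \<bar>z (fst sa)\<bar>)"
      by (simp add: abs_mult K0)
    finally show "\<bar>z s'\<bar> \<le> \<dots>" .
  qed
  also have "\<dots> = \<gamma> * (\<Sum>sa\<in>UNIV. (\<Sum>s'\<in>UNIV. K sa s') * \<bar>z (fst sa)\<bar>)"
    by (simp add: sum_distrib_left[symmetric] sum_distrib_right) (rule disjI2, rule sum.swap)
  also have "\<dots> = \<gamma> * (\<Sum>sa\<in>UNIV. w sa * \<bar>z (fst sa)\<bar>)"
    by (simp add: Kw)
  also have "(\<Sum>sa\<in>UNIV. w sa * \<bar>z (fst sa)\<bar>) = (\<Sum>s\<in>UNIV. \<Sum>a\<in>UNIV. w (s,a) * \<bar>z s\<bar>)"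
    by (simp add: sum.cartesian_product UNIV_Times_UNIV[symmetric] case_prod_beta del: UNIV_Times_UNIV)
  also have "\<dots> = ?S"
    by (simp add: sum_distrib_right[symmetric] w1)
  finally have "?S \<le> \<gamma> * ?S" .
  moreover have "0 \<le> ?S" by (simp add: sum_nonneg)
  ultimately have "?S = 0" using g
    by (metis (no_types, lifting) antisym le_trans mult_le_cancel_right1 not_le)
  hence "\<bar>z s\<bar> = 0" by (subst (asm) sum_nonneg_eq_0_iff) auto
  thus ?thesis by simp
qed


definition flow_ok :: "('s::finite \<Rightarrow> 'a::finite \<Rightarrow> 's pmf) \<Rightarrow> 's pmf \<Rightarrow> real \<Rightarrow> real ^ ('s \<times> 'a) \<Rightarrow> bool" where
  "flow_ok P mu \<gamma> d \<longleftrightarrow> (\<forall>i. 0 \<le> d $ i) \<and> (\<forall>s'. (\<Sum>a\<in>UNIV. d $ (s',a)) = pmf mu s' +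
     \<gamma> * (\<Sum>sa\<in>UNIV. pmf (P (fst sa) (snd sa)) s' * d $ sa))"

lemma occ_flow_ok: "0 \<le> \<gamma> \<Longrightarrow> \<gamma> < 1 \<Longrightarrow> flow_ok P mu \<gamma> (occ P mu \<gamma> pol)"
  unfolding flow_ok_def using occ_nonneg occ_flow by blast

lemma reconstruct:
  fixes P :: "'s::finite \<Rightarrow> 'a::finite \<Rightarrow> 's pmf"
  assumes g: "0 \<le> \<gamma>" "\<gamma> < 1" and mu: "\<forall>s. pmf mu s > 0"
    and fd: "flow_ok P mu \<gamma> d"
  shows "\<exists>\<pi>. occ P mu \<gamma> (stationary \<pi>) = d"
proof -
  have d0: "\<And>i. 0 \<le> d $ i" and dfl: "\<And>s'. (\<Sum>a\<in>UNIV. d $ (s',a)) = pmf mu s' +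
     \<gamma> * (\<Sum>sa\<in>UNIV. pmf (P (fst sa) (snd sa)) s' * d $ sa)"
    using fd unfolding flow_ok_def by auto
  define ds where "ds s = (\<Sum>a\<in>UNIV. d $ (s,a))" for s
  have dspos: "ds s > 0" for s
  proof -
    have "0 \<le> \<gamma> * (\<Sum>sa\<in>UNIV. pmf (P (fst sa) (snd sa)) s * d $ sa)"
      using g d0 by (simp add: sum_nonneg)
    moreover have "pmf mu s > 0" using mu by blast
    ultimately show ?thesis using dfl[of s] unfolding ds_def by linarith
  qed
  define f where "f s a = d $ (s,a) / ds s" for s a
  have f0: "0 \<le> f s a" for s a unfolding f_def using d0 dspos by (simp add: less_imp_le)
  have f1: "(\<Sum>a\<in>UNIV. f s a) = 1" for s
    unfolding f_def using dspos[of s] by (simp add: sum_divide_distrib[symmetric] ds_def)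
  define \<pi> where "\<pi> s = embed_pmf (f s)" for s
  have pmf\<pi>: "pmf (\<pi> s) a = f s a" for s a
    unfolding \<pi>_def
  proof (rule pmf_embed_pmf)
    show "\<And>x. 0 \<le> f s x" by (rule f0)
    show "(\<integral>\<^sup>+ x. ennreal (f s x) \<partial>count_space UNIV) = 1"
      by (simp add: nn_integral_count_space_finite f0 f1)
  qed
  have dprod: "d $ (s,a) = ds s * pmf (\<pi> s) a" for s a
    using dspos[of s] by (simp add: pmf\<pi> f_def)
  define e where "e = occ P mu \<gamma> (stationary \<pi>)"
  define es where "es s = (\<Sum>a\<in>UNIV. e $ (s,a))" for s
  have es_eq: "es s = (\<Sum>t. \<gamma> ^ t * pmf (stq P mu (stationary \<pi>) t) s)" for s
    unfolding es_def e_def by (rule occ_state[OF g])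
  have eprod: "e $ (s,a) = es s * pmf (\<pi> s) a" for s a
  proof -
    have "e $ (s,a) = (\<Sum>t. \<gamma> ^ t * pmf (stq P mu (stationary \<pi>) t) s * pmf (\<pi> s) a)"
      unfolding e_def occ_def by (simp add: sa_dist_stationary mult_ac)
    also have "\<dots> = es s * pmf (\<pi> s) a"
      unfolding es_eq by (rule suminf_mult2[symmetric]) (rule summable_sa[OF g])
    finally show ?thesis .
  qed
  have efl: "\<And>s'. (\<Sum>a\<in>UNIV. e $ (s',a)) = pmf mu s' +
     \<gamma> * (\<Sum>sa\<in>UNIV. pmf (P (fst sa) (snd sa)) s' * e $ sa)"
    unfolding e_def by (rule occ_flow[OF g])
  have eprod': "e $ sa = es (fst sa) * pmf (\<pi> (fst sa)) (snd sa)" for sa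
    using eprod[of "fst sa" "snd sa"] by simp
  have dprod': "d $ sa = ds (fst sa) * pmf (\<pi> (fst sa)) (snd sa)" for sa
    using dprod[of "fst sa" "snd sa"] by simp
  define K where "K sa s' = pmf (P (fst sa) (snd sa)) s' * pmf (\<pi> (fst sa)) (snd sa)" for sa s'
  define z where "z s = es s - ds s" for s
  have zfix: "z s' = \<gamma> * (\<Sum>sa\<in>UNIV. K sa s' * z (fst sa))" for s'
  proof -
    have "z s' = (pmf mu s' + \<gamma> * (\<Sum>sa\<in>UNIV. pmf (P (fst sa) (snd sa)) s' * e $ sa))
       - (pmf mu s' + \<gamma> * (\<Sum>sa\<in>UNIV. pmf (P (fst sa) (snd sa)) s' * d $ sa))"
      unfolding z_def es_def ds_def by (simp add: efl dfl)
    also have "\<dots> = \<gamma> * (\<Sum>sa\<in>UNIV. pmf (P (fst sa) (snd sa)) s' * e $ sa - pmf (P (fst sa) (snd sa)) s' * d $ sa)"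
      by (simp add: sum_subtractf right_diff_distrib)
    also have "\<dots> = \<gamma> * (\<Sum>sa\<in>UNIV. K sa s' * z (fst sa))"
      by (intro arg_cong[where f="\<lambda>x. \<gamma> * x"] sum.cong refl)
         (simp add: K_def z_def eprod' dprod' algebra_simps)
    finally show ?thesis .
  qed
  have zz: "z s = 0" for s
  proof (rule contraction_zero[OF g, where K=K and w="\<lambda>sa. pmf (\<pi> (fst sa)) (snd sa)"])
    show "\<And>sa s'. 0 \<le> K sa s'" by (simp add: K_def)
    show "(\<Sum>s'\<in>UNIV. K sa s') = pmf (\<pi> (fst sa)) (snd sa)" for sa
      by (simp add: K_def sum_distrib_right[symmetric] sum_pmf_eq_1)
    show "(\<Sum>a\<in>UNIV. pmf (\<pi> (fst (s, a))) (snd (s, a))) = 1" for s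
      by (simp add: sum_pmf_eq_1)
    show "z s' = \<gamma> * (\<Sum>sa\<in>UNIV. K sa s' * z (fst sa))" for s' by (rule zfix)
  qed
  have "e = d"
    unfolding vec_eq_iff
  proof
    fix i :: "'s \<times> 'a"
    obtain s a where i: "i = (s,a)" by fastforce
    show "e $ i = d $ i" using zz[of s] unfolding i z_def by (simp add: eprod dprod)
  qed
  thus ?thesis unfolding e_def by blast
qed


lemma flow_closed: "closed {d. flow_ok P mu \<gamma> d}"
  unfolding flow_ok_def
  by (intro closed_Collect_conj closed_Collect_all closed_Collect_le closed_Collect_eq continuous_intros)

lemma flow_bound:
  fixes P :: "'s::finite \<Rightarrow> 'a::finite \<Rightarrow> 's pmf"
  assumes g: "0 \<le> \<gamma>" "\<gamma> < 1" and fd: "flow_ok P mu \<gamma> d"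
  shows "d $ i \<le> 1 / (1 - \<gamma>)"
proof -
  have d0: "\<And>i. 0 \<le> d $ i" and dfl: "\<And>s'. (\<Sum>a\<in>UNIV. d $ (s',a)) = pmf mu s' +
     \<gamma> * (\<Sum>sa\<in>UNIV. pmf (P (fst sa) (snd sa)) s' * d $ sa)"
    using fd unfolding flow_ok_def by auto
  let ?T = "\<Sum>sa\<in>UNIV. d $ sa"
  have "?T = (\<Sum>s'\<in>UNIV. \<Sum>a\<in>UNIV. d $ (s',a))"
    by (simp add: sum.cartesian_product UNIV_Times_UNIV[symmetric] case_prod_beta del: UNIV_Times_UNIV)
  also have "\<dots> = (\<Sum>s'\<in>UNIV. pmf mu s') + \<gamma> * (\<Sum>s'\<in>UNIV. \<Sum>sa\<in>UNIV. pmf (P (fst sa) (snd sa)) s' * d $ sa)"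
    by (simp add: dfl sum.distrib sum_distrib_left)
  also have "(\<Sum>s'\<in>UNIV. pmf mu s') = 1" by (simp add: sum_pmf_eq_1)
  also have "(\<Sum>s'\<in>UNIV. \<Sum>sa\<in>UNIV. pmf (P (fst sa) (snd sa)) s' * d $ sa)
      = (\<Sum>sa\<in>UNIV. (\<Sum>s'\<in>UNIV. pmf (P (fst sa) (snd sa)) s') * d $ sa)"
    by (subst sum.swap) (simp add: sum_distrib_right)
  also have "\<dots> = ?T" by (simp add: sum_pmf_eq_1)
  finally have "?T = 1 + \<gamma> * ?T" .
  hence "?T * (1 - \<gamma>) = 1" by (simp add: algebra_simps)
  hence T: "?T = 1 / (1 - \<gamma>)" using g by (simp add: field_simps)
  have "d $ i \<le> ?T" by (rule member_le_sum) (use d0 in auto)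
  thus ?thesis using T by simp
qed

theorem lemma1:
  fixes P :: "'s::finite \<Rightarrow> 'a::finite \<Rightarrow> 's pmf"
    and mu :: "'s pmf"
    and \<gamma> :: real
    and Rset :: "(real ^ ('s \<times> 'a)) set"
  assumes "0 \<le> \<gamma>" and "\<gamma> < 1"
    and "\<forall>s. pmf mu s > 0"
    and "Rset \<noteq> {}" and "compact Rset" and "convex Rset"
  shows "\<exists>\<pi> :: 's \<Rightarrow> 'a pmf.
           (INF R\<in>Rset. disc_return P mu \<gamma> (stationary \<pi>) R)
         = (SUP pol :: ('s,'a) hpolicy. INF R\<in>Rset. disc_return P mu \<gamma> pol R)"
proof -
  have g: "0 \<le> \<gamma>" "\<gamma> < 1" using assms by auto
  define D where "D = {d. flow_ok P mu \<gamma> d}"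
  have DC: "D = cbox 0 (\<chi> i. 1 / (1 - \<gamma>)) \<inter> D"
  proof (intro equalityI subsetI IntI)
    fix d assume d: "d \<in> D"
    hence fd: "flow_ok P mu \<gamma> d" unfolding D_def by simp
    show "d \<in> cbox 0 (\<chi> i. 1 / (1 - \<gamma>))"
      unfolding mem_box_cart using flow_bound[OF g fd] fd unfolding flow_ok_def by simp
  qed auto
  have cD: "compact D"
    by (subst DC) (intro compact_Int_closed compact_cbox, simp add: D_def flow_closed)
  have occD: "occ P mu \<gamma> pol \<in> D" for pol
    unfolding D_def using occ_flow_ok[OF g] by simp
  hence neD: "D \<noteq> {}" by blast
  obtain b where b: "b > 0" "\<And>R. R \<in> Rset \<Longrightarrow> norm R \<le> b"
    using compact_imp_bounded[OF assms(5)] unfolding bounded_pos by blast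
  define F where "F d = (INF R\<in>Rset. R \<bullet> d)" for d :: "real ^ ('s \<times> 'a)"
  have bdd: "bdd_below ((\<lambda>R. R \<bullet> d) ` Rset)" for d :: "real ^ ('s \<times> 'a)"
  proof (rule bdd_belowI2)
    fix R assume "R \<in> Rset"
    have "\<bar>R \<bullet> d\<bar> \<le> norm R * norm d" by (rule Cauchy_Schwarz_ineq2)
    also have "\<dots> \<le> b * norm d" using b \<open>R \<in> Rset\<close> by (simp add: mult_right_mono)
    finally show "- (b * norm d) \<le> R \<bullet> d" by linarith
  qed
  have Flip: "F d \<le> F d' + b * dist d d'" for d d'
  proof -
    have "F d - b * dist d d' \<le> F d'"
      unfolding F_def
    proof (rule cINF_greatest[OF assms(4)])
      fix R assume R: "R \<in> Rset"
      have "(INF R\<in>Rset. R \<bullet> d) \<le> R \<bullet> d" by (rule cINF_lower[OF bdd R])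
      also have "R \<bullet> d = R \<bullet> d' + R \<bullet> (d - d')" by (simp add: inner_diff_right)
      also have "R \<bullet> (d - d') \<le> norm R * norm (d - d')"
        using Cauchy_Schwarz_ineq2[of R "d - d'"] by linarith
      also have "\<dots> \<le> b * dist d d'" using b R by (simp add: dist_norm mult_right_mono)
      finally show "(INF R\<in>Rset. R \<bullet> d) - b * dist d d' \<le> R \<bullet> d'" by simp
    qed
    thus ?thesis by simp
  qed
  have "b-lipschitz_on D F"
  proof (rule lipschitz_onI)
    fix x y
    show "dist (F x) (F y) \<le> b * dist x y"
      using Flip[of x y] Flip[of y x] by (simp add: dist_real_def dist_commute abs_le_iff)
  qed (use b in simp)
  hence "continuous_on D F" by (rule lipschitz_on_continuous_on)
  then obtain dstar where ds: "dstar \<in> D" "\<And>d. d \<in> D \<Longrightarrow> F d \<le> F dstar"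
    using continuous_attains_sup[OF cD neD] by blast
  obtain \<pi> where \<pi>: "occ P mu \<gamma> (stationary \<pi>) = dstar"
    using reconstruct[OF g assms(3)] ds(1) unfolding D_def by blast
  have val: "(INF R\<in>Rset. disc_return P mu \<gamma> pol R) = F (occ P mu \<gamma> pol)" for pol
    unfolding F_def by (simp add: disc_return_occ[OF g])
  have le: "F (occ P mu \<gamma> pol) \<le> F dstar" for pol by (rule ds(2)[OF occD])
  show ?thesis
  proof (intro exI[of _ \<pi>])
    show "(INF R\<in>Rset. disc_return P mu \<gamma> (stationary \<pi>) R)
         = (SUP pol :: ('s,'a) hpolicy. INF R\<in>Rset. disc_return P mu \<gamma> pol R)"
      unfolding val
    proof (rule antisym)
      show "F (occ P mu \<gamma> (stationary \<pi>)) \<le> (SUP pol. F (occ P mu \<gamma> pol))"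
        by (rule cSUP_upper) (auto intro!: bdd_aboveI2 le)
      show "(SUP pol. F (occ P mu \<gamma> pol)) \<le> F (occ P mu \<gamma> (stationary \<pi>))"
        by (rule cSUP_least) (auto simp: \<pi> le)
    qed
  qed
qed

end
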